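(* Let $D=2$, $K<C$, and let user and creator types be drawn i.i.d. from the uniform distribution on $\{x\in\mathbb R^2_{\ge0}:\|x\|_2=1\}$. Index the creators in increasing order of angle, so that $c_i=(\cos(X_i\pi/2),\sin(X_i\pi/2))$ where $X_1\le\dots\le X_C$ are the order statistics of $C$ i.i.d. $\mathrm{Uniform}[0,1]$ variables. Define $R_1=\left[0,\frac{X_1+X_{K+1}}2\right]$, $R_i=\left(\frac{X_{i-1}+X_{i+K-1}}2,\frac{X_i+X_{i+K}}2\right]$ for $2\le i\le C-K$, and $R_{C-K+1}=\left(\frac{X_{C-K}+X_C}2,1\right]$. Then at $t=0$, the user-centric algorithm assigns a user with type $(\cos(y\pi/2),\sin(y\pi/2))$, $y\in[0,1]$, to creators $\{i,i+1,\dots,i+K-1\}$ if and only if $y\in R_i$.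
   Context: The user-centric algorithm at $t=0$ assigns each user $i$ the set $UC_0(i)\in\arg\max_{S\subseteq\mathcal C_0,|S|\le K}\sum_{j\in S}u_i^Tc_j$, i.e. her $K$ creators of highest engagement $u_i^Tc_j$. *)

theory Defs
  imports "HOL-Analysis.Analysis"
begin

definition circ_pt :: "real \<Rightarrow> real \<times> real" where
  "circ_pt x = (cos (x * pi / 2), sin (x * pi / 2))"

text \<open>The user-centric assignment at t = 0 for a user of type u: the set of all
  maximizers S of the total engagement sum_{j in S} u . c_j over S subset {1..C}, |S| <= K.\<close>
definition UC0 :: "(nat \<Rightarrow> real) \<Rightarrow> nat \<Rightarrow> nat \<Rightarrow> real \<times> real \<Rightarrow> nat set set" where
  "UC0 X C K u = {S. S \<subseteq> {1..C} \<and> card S \<le> K \<and>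
      (\<forall>T. T \<subseteq> {1..C} \<and> card T \<le> K \<longrightarrow>
          (\<Sum>j\<in>T. u \<bullet> circ_pt (X j)) \<le> (\<Sum>j\<in>S. u \<bullet> circ_pt (X j)))}"

definition region :: "(nat \<Rightarrow> real) \<Rightarrow> nat \<Rightarrow> nat \<Rightarrow> nat \<Rightarrow> real set" where
  "region X C K i =
     (if i = 1 then {0 .. (X 1 + X (K + 1)) / 2}
      else if i = C - K + 1 then {(X (C - K) + X C) / 2 <.. 1}
      else {(X (i - 1) + X (i + K - 1)) / 2 <.. (X i + X (i + K)) / 2})"

end

theory Submission
  imports Defs
begin

lemma circ_inner: "circ_pt y \<bullet> circ_pt x = cos ((y - x) * pi / 2)"
  unfolding circ_pt_def by (simp add: cos_diff left_diff_distrib diff_divide_distrib)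

lemma cos_dist_mono:
  fixes d1 d2 :: real
  assumes "\<bar>d1\<bar> \<le> \<bar>d2\<bar>" "\<bar>d2\<bar> \<le> 1"
  shows "cos (d2 * pi / 2) \<le> cos (d1 * pi / 2)"
proof -
  have e1: "cos (d1 * pi / 2) = cos (\<bar>d1\<bar> * pi / 2)"
    by (metis abs_divide abs_mult abs_of_nonneg cos_abs_real pi_ge_zero zero_le_numeral)
  have e2: "cos (d2 * pi / 2) = cos (\<bar>d2\<bar> * pi / 2)"
    by (metis abs_divide abs_mult abs_of_nonneg cos_abs_real pi_ge_zero zero_le_numeral)
  have a: "\<bar>d1\<bar> * pi / 2 \<le> \<bar>d2\<bar> * pi / 2"
    using assms by (simp add: divide_right_mono mult_right_mono)
  have b: "\<bar>d2\<bar> * pi / 2 \<le> pi"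
    using assms pi_gt_zero by (simp add: mult_left_le_one_le)
  have c: "0 \<le> \<bar>d1\<bar> * pi / 2" using pi_gt_zero by simp
  show ?thesis unfolding e1 e2
    using cos_mono_le_eq[of "\<bar>d2\<bar> * pi / 2" "\<bar>d1\<bar> * pi / 2"] a b c by linarith
qed

lemma exchange:
  fixes f :: "nat \<Rightarrow> real"
  assumes fin: "finite W" "finite T" and card: "card T \<le> card W"
    and dom: "\<And>a b. a \<in> W \<Longrightarrow> b \<in> T - W \<Longrightarrow> f b \<le> f a"
    and nn: "\<And>a. a \<in> W \<Longrightarrow> 0 \<le> f a"
  shows "sum f T \<le> sum f W"
proof (cases "W = {}")
  case True
  then show ?thesis using card fin by simp
next
  case False
  define m where "m = Min (f ` W)"
  have mW: "\<And>a. a \<in> W \<Longrightarrow> m \<le> f a" unfolding m_def using fin by simp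
  have mge: "0 \<le> m" unfolding m_def using fin False nn by auto
  have mb: "\<And>b. b \<in> T - W \<Longrightarrow> f b \<le> m"
  proof -
    fix b assume "b \<in> T - W"
    have "m \<in> f ` W" unfolding m_def using fin False by simp
    then obtain a where "a \<in> W" "m = f a" by auto
    then show "f b \<le> m" using dom \<open>b \<in> T - W\<close> by simp
  qed
  have ct: "card (T - W) \<le> card (W - T)"
  proof -
    have "card (T - W) = card T - card (T \<inter> W)" using fin by (simp add: card_Diff_subset_Int)
    moreover have "card (W - T) = card W - card (W \<inter> T)" using fin by (simp add: card_Diff_subset_Int)
    ultimately show ?thesis using card by (simp add: Int_commute)
  qed
  have "sum f (T - W) \<le> card (T - W) * m"
    using sum_bounded_above[of "T - W" f m] mb by simp
  also have "\<dots> \<le> card (W - T) * m" using ct mge by (simp add: mult_right_mono)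
  also have "\<dots> \<le> sum f (W - T)"
    using sum_bounded_below[of "W - T" m f] mW by simp
  finally have s: "sum f (T - W) \<le> sum f (W - T)" .
  have "sum f T = sum f (T - (T \<inter> W)) + sum f (T \<inter> W)"
    using fin by (intro sum.subset_diff) auto
  moreover have "T - (T \<inter> W) = T - W" by blast
  moreover have "sum f W = sum f (W - (W \<inter> T)) + sum f (W \<inter> T)"
    using fin by (intro sum.subset_diff) auto
  moreover have "W - (W \<inter> T) = W - T" by blast
  ultimately show ?thesis using s by (simp add: Int_commute)
qed

theorem lemma11:
  fixes X :: "nat \<Rightarrow> real" and C K :: nat
  assumes "1 \<le> K" and "K < C"
    and "\<And>j. j \<in> {1..C} \<Longrightarrow> 0 \<le> X j \<and> X j \<le> 1"
    and "\<And>j. 1 \<le> j \<Longrightarrow> j < C \<Longrightarrow> X j \<le> X (j + 1)"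
  shows "\<forall>y \<in> {0..1}. \<forall>i \<in> {1..C - K + 1}.
           (y \<in> region X C K i \<longrightarrow> {i..i + K - 1} \<in> UC0 X C K (circ_pt y)) \<and>
           (UC0 X C K (circ_pt y) = {{i..i + K - 1}} \<longrightarrow> y \<in> region X C K i)"
proof -
  note rng = assms(3)
  have mono: "X j \<le> X k" if "1 \<le> j" "j \<le> k" "k \<le> C" for j k
    using that
  proof (induction k)
    case 0 then show ?case by simp
  next
    case (Suc k)
    show ?case
    proof (cases "j = Suc k")
      case True then show ?thesis by simp
    next
      case False
      then have "X j \<le> X k" using Suc by simp
      moreover have "X k \<le> X (k + 1)" using assms(4)[of k] Suc False by simp
      ultimately show ?thesis by simp
    qed
  qed
  have part1: "{i..i + K - 1} \<in> UC0 X C K (circ_pt y)"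
    if y: "y \<in> {0..1}" and i: "i \<in> {1..C - K + 1}" and yr: "y \<in> region X C K i" for y i
  proof -
    define f where "f j = circ_pt y \<bullet> circ_pt (X j)" for j
    define W where "W = {i..i + K - 1}"
    have Wsub: "W \<subseteq> {1..C}" unfolding W_def using i assms(1,2) by auto
    have cW: "card W = K" unfolding W_def using assms(1) by simp
    have low: "(X (i - 1) + X (i + K - 1)) / 2 < y" if "i \<noteq> 1"
    proof (cases "i = C - K + 1")
      case True then show ?thesis using yr that unfolding region_def
        by (simp add: assms(1,2) Suc_diff_le less_imp_le)
    next
      case False then show ?thesis using yr that unfolding region_def by simp
    qed
    have upp: "y \<le> (X i + X (i + K)) / 2" if "i \<noteq> C - K + 1"
    proof (cases "i = 1")
      case True then show ?thesis using yr that unfolding region_def by simp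
    next
      case False then show ?thesis using yr that unfolding region_def by simp
    qed
    have fdef: "f j = cos ((y - X j) * pi / 2)" for j unfolding f_def by (rule circ_inner)
    have dist: "\<bar>y - X a\<bar> \<le> \<bar>y - X b\<bar>" if a: "a \<in> W" and b: "b \<in> {1..C} - W" for a b
    proof -
      have ai: "i \<le> a" "a \<le> i + K - 1" using a unfolding W_def by auto
      have aC: "a \<le> C" using a Wsub by auto
      have Xa1: "X i \<le> X a" using mono[of i a] ai aC i by auto
      have Xa2: "X a \<le> X (i + K - 1)" using mono[of a "i + K - 1"] ai aC i assms by auto
      consider "b < i" | "b > i + K - 1" using b unfolding W_def by force
      then show ?thesis
      proof cases
        case 1
        then have i1: "i \<noteq> 1" using b by auto
        have "X b \<le> X (i - 1)" using mono[of b "i - 1"] 1 b i by auto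
        moreover have "X (i - 1) \<le> X i" using mono[of "i - 1" i] i1 i assms by auto
        ultimately show ?thesis using low[OF i1] Xa1 Xa2 by (auto simp: abs_if)
      next
        case 2
        then have iC: "i \<noteq> C - K + 1" using b assms by auto
        have "X (i + K) \<le> X b" using mono[of "i + K" b] 2 b i by auto
        moreover have "X (i + K - 1) \<le> X (i + K)" using mono[of "i + K - 1" "i + K"] iC i assms by auto
        ultimately show ?thesis using upp[OF iC] Xa1 Xa2 by (auto simp: abs_if)
      qed
    qed
    have bnd: "\<bar>y - X j\<bar> \<le> 1" if "j \<in> {1..C}" for j using rng[OF that] y by auto
    show ?thesis
      unfolding UC0_def
    proof (intro CollectI conjI allI impI)
      show "{i..i + K - 1} \<subseteq> {1..C}" using Wsub W_def by simp
      show "card {i..i + K - 1} \<le> K" using cW W_def by simp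
      fix T assume T: "T \<subseteq> {1..C} \<and> card T \<le> K"
      have "sum f T \<le> sum f W"
      proof (rule exchange)
        show "finite W" "finite T" using T W_def finite_subset by auto
        show "card T \<le> card W" using T cW by simp
        show "f b \<le> f a" if "a \<in> W" "b \<in> T - W" for a b
          unfolding fdef using cos_dist_mono dist[of a b] that T bnd by auto
        show "0 \<le> f a" if "a \<in> W" for a
        proof -
          have "\<bar>y - X a\<bar> \<le> 1" using bnd Wsub that by auto
          then have "-1 \<le> y - X a" "y - X a \<le> 1" by auto
          then have "-1 * (pi / 2) \<le> (y - X a) * (pi / 2)" "(y - X a) * (pi / 2) \<le> 1 * (pi / 2)"
            using pi_gt_zero by (intro mult_right_mono; simp)+
          then show ?thesis unfolding fdef
            by (intro cos_ge_zero) auto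
        qed
      qed
      then show "(\<Sum>j\<in>T. circ_pt y \<bullet> circ_pt (X j)) \<le> (\<Sum>j\<in>{i..i + K - 1}. circ_pt y \<bullet> circ_pt (X j))"
        unfolding f_def W_def .
    qed
  qed
  have cover: "\<exists>i' \<in> {1..C - K + 1}. y \<in> region X C K i'" if y: "y \<in> {0..1}" for y
  proof (cases "y \<le> (X 1 + X (K + 1)) / 2")
    case True then show ?thesis using y unfolding region_def by (intro bexI[of _ 1]) auto
  next
    case F: False
    show ?thesis
    proof (cases "\<exists>i. i \<in> {1..C - K} \<and> y \<le> (X i + X (i + K)) / 2")
      case True
      define i0 where "i0 = (LEAST i. i \<in> {1..C - K} \<and> y \<le> (X i + X (i + K)) / 2)"
      have h: "i0 \<in> {1..C - K} \<and> y \<le> (X i0 + X (i0 + K)) / 2"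
        unfolding i0_def using True by (metis (mono_tags, lifting) LeastI)
      have i02: "i0 \<noteq> 1" using h F by auto
      have "\<not> (i0 - 1 \<in> {1..C - K} \<and> y \<le> (X (i0 - 1) + X (i0 - 1 + K)) / 2)"
      proof
        assume P: "i0 - 1 \<in> {1..C - K} \<and> y \<le> (X (i0 - 1) + X (i0 - 1 + K)) / 2"
        have "i0 \<le> i0 - 1" using Least_le[of "\<lambda>i. i \<in> {1..C - K} \<and> y \<le> (X i + X (i + K)) / 2" "i0 - 1", OF P] unfolding i0_def[symmetric] .
        then show False using h i02 by auto
      qed
      then have "(X (i0 - 1) + X (i0 - 1 + K)) / 2 < y" using h i02 by auto
      moreover have "i0 - 1 + K = i0 + K - 1" using i02 h by auto
      ultimately have "y \<in> region X C K i0" using h i02 unfolding region_def by auto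
      then show ?thesis using h by (intro bexI[of _ i0]) auto
    next
      case False
      then have "\<not> y \<le> (X (C - K) + X (C - K + K)) / 2" using assms by auto
      then have "y \<in> region X C K (C - K + 1)" using y assms unfolding region_def by auto
      then show ?thesis by (intro bexI[of _ "C - K + 1"]) auto
    qed
  qed
  show ?thesis
  proof (intro ballI conjI impI)
    fix y :: real and i :: nat assume y: "y \<in> {0..1}" and i: "i \<in> {1..C - K + 1}"
    show "{i..i + K - 1} \<in> UC0 X C K (circ_pt y)" if "y \<in> region X C K i"
      using part1[OF y i that] .
    assume U: "UC0 X C K (circ_pt y) = {{i..i + K - 1}}"
    obtain i' where i': "i' \<in> {1..C - K + 1}" "y \<in> region X C K i'" using cover[OF y] by blast
    have "{i'..i' + K - 1} = {i..i + K - 1}" using part1[OF y i'] U by simp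
    moreover have "i' \<in> {i'..i' + K - 1}" "i \<in> {i..i + K - 1}" using assms(1) by auto
    ultimately have "i' = i" by (metis atLeastAtMost_iff le_antisym)
    then show "y \<in> region X C K i" using i' by simp
  qed
qed

end
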